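(* Let $G$ be a connected simple graph with $n \geq 2$ vertices $v_1, \ldots, v_n$, and let $x = (x_1, \ldots, x_n)$ be an eigenvector of $L(G)$ corresponding to the eigenvalue $\lambda_2(G)$. Suppose that $x_1 = \max_i x_i$ and $x_2 = \min_i x_i$, and that the graph distance between $v_1$ and $v_2$ in $G$ is at most $2$. Then $\lambda(G) \geq 1$. In particular, every connected simple graph $G$ with $n\ge 2$ vertices and diameter less than $3$ satisfies $\lambda(G) \geq 1$.
   Context: For a simple graph $G$ on $n$ vertices, $L(G) = D(G) - A(G)$ is its Laplacian matrix ($A(G)$ the adjacency matrix, $D(G)$ the diagonal degree matrix), with eigenvalues $0 = \lambda_1(G) \leq \lambda_2(G) \leq \cdots \leq \lambda_n(G)$, and $\lambda(G) := \lambda_2(G)$ (the algebraic connectivity). Coordinate $x_i$ of a vector $x \in \mathbb{R}^n$ corresponds to vertex $v_i$. *)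

theory Defs
  imports "Jordan_Normal_Form.Char_Poly" "HOL-Library.Multiset"
begin

text \<open>Simple graphs on the vertex set {0..<n} (vertex v_i is index i-1),
  given by an adjacency relation E.\<close>

definition simple_graph :: "nat \<Rightarrow> (nat \<Rightarrow> nat \<Rightarrow> bool) \<Rightarrow> bool" where
  "simple_graph n E \<longleftrightarrow>
     (\<forall>i j. E i j \<longrightarrow> i < n \<and> j < n) \<and>
     (\<forall>i j. E i j \<longrightarrow> E j i) \<and>
     (\<forall>i. \<not> E i i)"

definition connected_graph :: "nat \<Rightarrow> (nat \<Rightarrow> nat \<Rightarrow> bool) \<Rightarrow> bool" where
  "connected_graph n E \<longleftrightarrow> (\<forall>i<n. \<forall>j<n. E\<^sup>*\<^sup>* i j)"

definition dist_le :: "(nat \<Rightarrow> nat \<Rightarrow> bool) \<Rightarrow> nat \<Rightarrow> nat \<Rightarrow> nat \<Rightarrow> bool" where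
  "dist_le E u v d \<longleftrightarrow> (\<exists>m\<le>d. (E ^^ m) u v)"

definition diameter_lt3 :: "nat \<Rightarrow> (nat \<Rightarrow> nat \<Rightarrow> bool) \<Rightarrow> bool" where
  "diameter_lt3 n E \<longleftrightarrow> (\<forall>i<n. \<forall>j<n. dist_le E i j 2)"

definition degree :: "nat \<Rightarrow> (nat \<Rightarrow> nat \<Rightarrow> bool) \<Rightarrow> nat \<Rightarrow> nat" where
  "degree n E i = card {k. k < n \<and> E i k}"

definition laplacian :: "nat \<Rightarrow> (nat \<Rightarrow> nat \<Rightarrow> bool) \<Rightarrow> real mat" where
  "laplacian n E = mat n n (\<lambda>(i, j).
     (if i = j then real (degree n E i) else 0) - (if E i j then 1 else 0))"

text \<open>Laplacian eigenvalues with multiplicity, in nondecreasing order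
  (the roots of the characteristic polynomial; L is real symmetric so all are real).\<close>
definition lap_eigenvalues :: "nat \<Rightarrow> (nat \<Rightarrow> nat \<Rightarrow> bool) \<Rightarrow> real list" where
  "lap_eigenvalues n E = sorted_list_of_multiset (proots (char_poly (laplacian n E)))"

definition alg_conn :: "nat \<Rightarrow> (nat \<Rightarrow> nat \<Rightarrow> bool) \<Rightarrow> real" where
  "alg_conn n E = lap_eigenvalues n E ! 1"

end

theory Submission
  imports Defs "Jordan_Normal_Form.Jordan_Normal_Form_Existence" "Jordan_Normal_Form.Jordan_Normal_Form_Uniqueness"
begin


lemma lap_carrier: "laplacian n E \<in> carrier_mat n n"
  by (simp add: laplacian_def)

lemma lap_entry: "i < n \<Longrightarrow> j < n \<Longrightarrow> laplacian n E $$ (i,j) =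
   (if i = j then real (degree n E i) else 0) - (if E i j then 1 else 0)"
  by (simp add: laplacian_def)

lemma lap_sym: "simple_graph n E \<Longrightarrow> i < n \<Longrightarrow> j < n \<Longrightarrow>
   laplacian n E $$ (i,j) = laplacian n E $$ (j,i)"
  unfolding lap_entry simple_graph_def by auto

lemma lap_mult_sum: "v \<in> carrier_vec n \<Longrightarrow> i < n \<Longrightarrow>
  (laplacian n E *\<^sub>v v) $ i = (\<Sum>j<n. laplacian n E $$ (i,j) * v $ j)"
  using lap_carrier[of n E]
  by (auto simp: scalar_prod_def row_def lessThan_atLeast0)

lemma lap_mult: assumes v: "v \<in> carrier_vec n" and i: "i < n"
  shows "(laplacian n E *\<^sub>v v) $ i = (\<Sum>k\<in>{k. k < n \<and> E i k}. v $ i - v $ k)"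
proof -
  let ?S = "{k. k < n \<and> E i k}"
  have "(laplacian n E *\<^sub>v v) $ i = (\<Sum>j<n. (if i = j then real (degree n E i) * v $ j else 0)
     - (if E i j then v $ j else 0))"
    unfolding lap_mult_sum[OF v i] by (rule sum.cong, auto simp: lap_entry i left_diff_distrib)
  also have "\<dots> = real (degree n E i) * v $ i - (\<Sum>j<n. if E i j then v $ j else 0)"
    by (simp add: sum_subtractf i)
  also have "(\<Sum>j<n. if E i j then v $ j else 0) = (\<Sum>k\<in>?S. v $ k)"
    by (simp add: sum.If_cases Int_def lessThan_def conj_commute)
  also have "real (degree n E i) * v $ i - (\<Sum>k\<in>?S. v $ k) = (\<Sum>k\<in>?S. v $ i - v $ k)"
    by (simp add: sum_subtractf degree_def)
  finally show ?thesis .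
qed

lemma lap_symm_form: assumes sg: "simple_graph n E" and u: "u \<in> carrier_vec n" and v: "v \<in> carrier_vec n"
  shows "(\<Sum>i<n. u $ i * (laplacian n E *\<^sub>v v) $ i) = (\<Sum>i<n. v $ i * (laplacian n E *\<^sub>v u) $ i)"
proof -
  let ?L = "laplacian n E"
  have "(\<Sum>i<n. u $ i * (?L *\<^sub>v v) $ i) = (\<Sum>i<n. \<Sum>j<n. u $ i * ?L $$ (i,j) * v $ j)"
    by (simp add: lap_mult_sum[OF v] sum_distrib_left mult.assoc)
  also have "\<dots> = (\<Sum>j<n. \<Sum>i<n. u $ i * ?L $$ (i,j) * v $ j)"
    by (rule sum.swap)
  also have "\<dots> = (\<Sum>j<n. \<Sum>i<n. v $ j * (?L $$ (j,i) * u $ i))"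
    by (intro sum.cong refl, simp add: lap_sym[OF sg])
  also have "\<dots> = (\<Sum>i<n. v $ i * (?L *\<^sub>v u) $ i)"
    by (simp add: lap_mult_sum[OF u] sum_distrib_left)
  finally show ?thesis .
qed

lemma lap_quad: assumes sg: "simple_graph n E" and v: "v \<in> carrier_vec n"
  shows "2 * (\<Sum>i<n. v $ i * (laplacian n E *\<^sub>v v) $ i)
     = (\<Sum>i<n. \<Sum>k<n. if E i k then (v $ i - v $ k)^2 else 0)"
proof -
  let ?L = "laplacian n E"
  define T where "T = (\<Sum>i<n. \<Sum>k<n. if E i k then v $ i * (v $ i - v $ k) else 0)"
  have T1: "(\<Sum>i<n. v $ i * (?L *\<^sub>v v) $ i) = T"
    unfolding T_def
  proof (intro sum.cong refl)
    fix i assume i: "i \<in> {..<n}"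
    have "(\<Sum>k<n. if E i k then v $ i * (v $ i - v $ k) else 0)
        = (\<Sum>k\<in>{k. k < n \<and> E i k}. v $ i * (v $ i - v $ k))"
      by (simp add: sum.If_cases Int_def lessThan_def conj_commute)
    then show "v $ i * (?L *\<^sub>v v) $ i = (\<Sum>k<n. if E i k then v $ i * (v $ i - v $ k) else 0)"
      using i by (simp add: lap_mult[OF v] sum_distrib_left)
  qed
  have "T = (\<Sum>k<n. \<Sum>i<n. if E i k then v $ i * (v $ i - v $ k) else 0)"
    unfolding T_def by (rule sum.swap)
  also have "\<dots> = (\<Sum>i<n. \<Sum>k<n. if E i k then v $ k * (v $ k - v $ i) else 0)"
  proof (intro sum.cong refl)
    fix i k assume "i \<in> {..<n}" "k \<in> {..<n}"
    show "(if E k i then v $ k * (v $ k - v $ i) else 0) = (if E i k then v $ k * (v $ k - v $ i) else 0)"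
      using sg unfolding simple_graph_def by metis
  qed
  finally have T2: "T = (\<Sum>i<n. \<Sum>k<n. if E i k then v $ k * (v $ k - v $ i) else 0)" .
  have "2 * T = T + T" by simp
  also have "\<dots> = (\<Sum>i<n. \<Sum>k<n. (if E i k then v $ i * (v $ i - v $ k) else 0)
     + (if E i k then v $ k * (v $ k - v $ i) else 0))"
    by (subst (2) T2, unfold T_def, simp add: sum.distrib)
  also have "\<dots> = (\<Sum>i<n. \<Sum>k<n. if E i k then (v $ i - v $ k)^2 else 0)"
    by (intro sum.cong refl, simp add: power2_eq_square algebra_simps)
  finally show ?thesis using T1 by simp
qed

lemma lap_quad_nonneg: assumes sg: "simple_graph n E" and v: "v \<in> carrier_vec n"
  shows "(\<Sum>i<n. v $ i * (laplacian n E *\<^sub>v v) $ i) \<ge> 0"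
proof -
  have "(\<Sum>i<n. \<Sum>k<n. if E i k then (v $ i - v $ k)^2 else 0) \<ge> (0::real)"
    by (intro sum_nonneg, auto)
  with lap_quad[OF sg v] show ?thesis by linarith
qed

lemma lap_quad_zero: assumes sg: "simple_graph n E" and v: "v \<in> carrier_vec n"
  and z: "(\<Sum>i<n. v $ i * (laplacian n E *\<^sub>v v) $ i) = 0"
  and i: "i < n" and k: "k < n" and e: "E i k"
  shows "v $ i = v $ k"
proof -
  let ?f = "\<lambda>i. \<Sum>k<n. if E i k then (v $ i - v $ k)^2 else (0::real)"
  have s0: "(\<Sum>i<n. ?f i) = 0" using lap_quad[OF sg v] z by simp
  have nn: "\<And>x. 0 \<le> ?f x" by (intro sum_nonneg, auto)
  have "?f i = 0"
    using s0 sum_nonneg_eq_0_iff[of "{..<n}" ?f] i nn by auto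
  hence "(if E i k then (v $ i - v $ k)^2 else 0) = (0::real)"
    using sum_nonneg_eq_0_iff[of "{..<n}" "\<lambda>k. if E i k then (v $ i - v $ k)^2 else (0::real)"] k
    by auto
  with e show ?thesis by simp
qed

lemma conn_const: assumes sg: "simple_graph n E" and conn: "connected_graph n E"
  and eq: "\<And>i k. i < n \<Longrightarrow> k < n \<Longrightarrow> E i k \<Longrightarrow> f i = (f k :: 'a)"
  and i: "i < n"
  shows "f i = f 0"
proof -
  have n0: "0 < n" using i by simp
  have "E\<^sup>*\<^sup>* 0 i" using conn n0 i unfolding connected_graph_def by auto
  then have "f i = f 0"
  proof (induction rule: rtranclp_induct)
    case base then show ?case by simp
  next
    case (step y z)
    from step(2) sg have "y < n" "z < n" unfolding simple_graph_def by auto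
    with eq[OF this step(2)] step(3) show ?case by simp
  qed
  then show ?thesis .
qed

lemma lap_kernel_const: assumes sg: "simple_graph n E" and conn: "connected_graph n E"
  and v: "v \<in> carrier_vec n" and z: "(\<Sum>i<n. v $ i * (laplacian n E *\<^sub>v v) $ i) = 0"
  and i: "i < n"
  shows "v $ i = v $ 0"
  by (rule conn_const[OF sg conn _ i], rule lap_quad_zero[OF sg v z])

lemma lap_ev_nonneg: assumes sg: "simple_graph n E" and ev: "eigenvector (laplacian n E) v mu"
  shows "mu \<ge> 0"
proof -
  let ?L = "laplacian n E"
  have dr: "dim_row ?L = n" using lap_carrier[of n E] by simp
  from ev[unfolded eigenvector_def dr] have v: "v \<in> carrier_vec n" and v0: "v \<noteq> 0\<^sub>v n"
    and Lv: "?L *\<^sub>v v = mu \<cdot>\<^sub>v v" by auto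
  from v0 v obtain i where i: "i < n" and vi: "v $ i \<noteq> 0" by (auto simp: vec_eq_iff)
  have sq: "v $ i * v $ i > 0" using vi by (metis not_real_square_gt_zero)
  have pos: "(\<Sum>i<n. v $ i * v $ i) > 0"
  proof (rule sum_pos2[of "{..<n}" i])
  qed (insert i sq, auto)
  have "(\<Sum>i<n. v $ i * (?L *\<^sub>v v) $ i) = mu * (\<Sum>i<n. v $ i * v $ i)"
    using v by (simp add: Lv sum_distrib_left algebra_simps)
  with lap_quad_nonneg[OF sg v] pos show ?thesis
    by (metis zero_le_mult_iff not_le)
qed

lemma lap_sq_kernel: assumes sg: "simple_graph n E" and v: "v \<in> carrier_vec n"
  and z: "laplacian n E *\<^sub>v (laplacian n E *\<^sub>v v) = 0\<^sub>v n"
  shows "laplacian n E *\<^sub>v v = 0\<^sub>v n"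
proof -
  let ?L = "laplacian n E"
  define u where "u = ?L *\<^sub>v v"
  have u: "u \<in> carrier_vec n" unfolding u_def using lap_carrier[of n E] v by auto
  have "(\<Sum>i<n. u $ i * u $ i) = (\<Sum>i<n. u $ i * (?L *\<^sub>v v) $ i)" unfolding u_def ..
  also have "\<dots> = (\<Sum>i<n. v $ i * (?L *\<^sub>v u) $ i)" by (rule lap_symm_form[OF sg u v])
  also have "\<dots> = 0" using z unfolding u_def by simp
  finally have s: "(\<Sum>i<n. u $ i * u $ i) = 0" .
  have "\<And>i. i < n \<Longrightarrow> u $ i = 0"
  proof -
    fix i assume i: "i < n"
    have "u $ i * u $ i = 0"
      using s sum_nonneg_eq_0_iff[of "{..<n}" "\<lambda>i. u $ i * u $ i"] i by auto
    then show "u $ i = 0" by simp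
  qed
  then show ?thesis using u unfolding u_def[symmetric] by (intro eq_vecI, auto)
qed

lemma lapC_real_ev: assumes sg: "simple_graph n E"
  and ev: "eigenvector (map_mat complex_of_real (laplacian n E)) w a"
  shows "Im a = 0"
proof -
  let ?L = "laplacian n E"
  let ?LC = "map_mat complex_of_real ?L"
  have dr: "dim_row ?LC = n" "dim_col ?LC = n" using lap_carrier[of n E] by auto
  from ev[unfolded eigenvector_def dr] have w: "w \<in> carrier_vec n" and w0: "w \<noteq> 0\<^sub>v n"
    and Lw: "?LC *\<^sub>v w = a \<cdot>\<^sub>v w" by auto
  define x where "x = vec n (\<lambda>i. Re (w $ i))"
  define y where "y = vec n (\<lambda>i. Im (w $ i))"
  have x: "x \<in> carrier_vec n" and y: "y \<in> carrier_vec n" unfolding x_def y_def by auto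
  have LCw: "\<And>i. i < n \<Longrightarrow> (?LC *\<^sub>v w) $ i = (\<Sum>j<n. complex_of_real (?L $$ (i,j)) * w $ j)"
    using w dr lap_carrier[of n E] by (auto simp: scalar_prod_def row_def lessThan_atLeast0)
  have Lx: "\<And>i. i < n \<Longrightarrow> (?L *\<^sub>v x) $ i = Re a * x $ i - Im a * y $ i"
  proof -
    fix i assume i: "i < n"
    have "(?L *\<^sub>v x) $ i = Re ((?LC *\<^sub>v w) $ i)"
      unfolding LCw[OF i] lap_mult_sum[OF x i] Re_sum using i by (auto simp: x_def intro!: sum.cong)
    also have "\<dots> = Re a * x $ i - Im a * y $ i" unfolding Lw using i w by (simp add: x_def y_def)
    finally show "(?L *\<^sub>v x) $ i = Re a * x $ i - Im a * y $ i" .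
  qed
  have Ly: "\<And>i. i < n \<Longrightarrow> (?L *\<^sub>v y) $ i = Re a * y $ i + Im a * x $ i"
  proof -
    fix i assume i: "i < n"
    have "(?L *\<^sub>v y) $ i = Im ((?LC *\<^sub>v w) $ i)"
      unfolding LCw[OF i] lap_mult_sum[OF y i] Im_sum using i by (auto simp: y_def intro!: sum.cong)
    also have "\<dots> = Re a * y $ i + Im a * x $ i" unfolding Lw using i w by (simp add: x_def y_def)
    finally show "(?L *\<^sub>v y) $ i = Re a * y $ i + Im a * x $ i" .
  qed
  have "(\<Sum>i<n. x $ i * (?L *\<^sub>v y) $ i) = (\<Sum>i<n. y $ i * (?L *\<^sub>v x) $ i)"
    by (rule lap_symm_form[OF sg x y])
  hence "(\<Sum>i<n. x $ i * (Re a * y $ i + Im a * x $ i)) = (\<Sum>i<n. y $ i * (Re a * x $ i - Im a * y $ i))"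
    using Lx Ly by simp
  hence "Im a * (\<Sum>i<n. x $ i * x $ i + y $ i * y $ i) = 0"
    by (simp add: sum_distrib_left sum_subtractf sum.distrib algebra_simps)
  moreover have "(\<Sum>i<n. x $ i * x $ i + y $ i * y $ i) > 0"
  proof -
    from w0 w obtain i where i: "i < n" and wi: "w $ i \<noteq> 0" by (auto simp: vec_eq_iff)
    hence "x $ i * x $ i + y $ i * y $ i > 0" unfolding x_def y_def using i
      by (simp add: complex_eq_iff add_pos_nonneg add_nonneg_pos)
        (metis add.commute add_pos_nonneg complex_eq_iff not_real_square_gt_zero zero_complex.sel(1,2) zero_le_square)
    then show ?thesis by (intro sum_pos2[of "{..<n}" i], insert i, auto)
  qed
  ultimately show ?thesis by simp
qed



lemma map_poly_of_real_linprod: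
  "map_poly complex_of_real (\<Prod>e\<leftarrow>es. [:- e, 1:]) = (\<Prod>e\<leftarrow>es. [:- complex_of_real e, 1:])"
proof -
  interpret m: map_poly_comm_ring_hom "complex_of_real" ..
  show ?thesis by (induct es) (simp_all add: m.hom_mult hom_distribs del: mult_pCons_left)
qed

lemma map_poly_of_real_inj: "map_poly complex_of_real p = map_poly complex_of_real q \<Longrightarrow> p = q"
proof (rule poly_eqI)
  fix i assume "map_poly complex_of_real p = map_poly complex_of_real q"
  hence "coeff (map_poly complex_of_real p) i = coeff (map_poly complex_of_real q) i" by simp
  thus "coeff p i = coeff q i" by (simp add: coeff_map_poly)
qed

lemma lap_split: assumes sg: "simple_graph n E"
  shows "\<exists>es. char_poly (laplacian n E) = (\<Prod>e\<leftarrow>es. [:- e, 1:]) \<and> length es = n"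
proof -
  let ?L = "laplacian n E"
  let ?LC = "map_mat complex_of_real ?L"
  have LC: "?LC \<in> carrier_mat n n" using lap_carrier[of n E] by simp
  from char_poly_factorized[OF LC] obtain as where
    cp: "char_poly ?LC = (\<Prod>a\<leftarrow>as. [:- a, 1:])" and len: "length as = n" by auto
  have real: "\<And>a. a \<in> set as \<Longrightarrow> Im a = 0"
  proof -
    fix a assume a: "a \<in> set as"
    have "poly (char_poly ?LC) a = 0" unfolding cp poly_prod_list using a
      by (auto simp: prod_list_zero_iff)
    hence "eigenvalue ?LC a" using eigenvalue_root_char_poly[OF LC] by simp
    then obtain w where "eigenvector ?LC w a" unfolding eigenvalue_def by auto
    then show "Im a = 0" by (rule lapC_real_ev[OF sg])
  qed
  define es where "es = map Re as"
  have as: "as = map complex_of_real es" unfolding es_def using real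
    by (induct as) (auto simp: complex_eq_iff)
  have "map_poly complex_of_real (char_poly ?L) = char_poly ?LC"
    by (rule of_real_hom.char_poly_hom[symmetric, OF lap_carrier])
  also have "\<dots> = map_poly complex_of_real (\<Prod>e\<leftarrow>es. [:- e, 1:])"
    unfolding cp map_poly_of_real_linprod as by (simp add: comp_def)
  finally have "char_poly ?L = (\<Prod>e\<leftarrow>es. [:- e, 1:])" by (rule map_poly_of_real_inj)
  then show ?thesis using len unfolding es_def by (intro exI[of _ "map Re as"], auto)
qed



lemma order_jordan_prod:
  fixes c :: "'a :: field"
  shows "Polynomial.order c (\<Prod>(k,a)\<leftarrow>n_as. [:- a, 1:] ^ k) = sum_list (map fst [(k, e)\<leftarrow>n_as . e = c])"
proof (induct n_as)
  case Nil then show ?case by (simp add: order_0I)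
next
  case (Cons ka n_as)
  obtain k a where ka: "ka = (k,a)" by force
  have nz: "(\<Prod>(k,a)\<leftarrow>n_as. [:- a, 1:] ^ k) \<noteq> 0"
    by (auto simp: prod_list_zero_iff)
  have nz2: "([:- a, 1:] ^ k :: 'a poly) \<noteq> 0" by simp
  have "Polynomial.order c ([:- a, 1:] ^ k) = (if a = c then k else 0)"
  proof (cases "a = c")
    case True then show ?thesis using order_power_n_n[of c k] by simp
  next
    case False
    have "poly ([:- a, 1:] ^ k) c \<noteq> 0" using False by (simp add: poly_power)
    then show ?thesis using False by (simp add: order_0I)
  qed
  then show ?case using Cons nz nz2 unfolding ka
    by (simp add: order_mult)
qed

lemma min2_sum_list: "min 2 (sum_list ks) \<le> sum_list (map (min (2::nat)) ks)"
  by (induct ks) auto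

lemma lap_one: assumes "i < n" shows "(laplacian n E *\<^sub>v vec n (\<lambda>_. 1)) $ i = 0"
  using lap_mult[of "vec n (\<lambda>_. 1)" n i E] assms by simp

lemma lap_sq_kernel_dim: assumes sg: "simple_graph n E" and conn: "connected_graph n E"
  and n0: "0 < n"
  shows "kernel.dim n (laplacian n E * laplacian n E) \<le> 1"
proof -
  let ?L = "laplacian n E"
  let ?A = "?L * ?L"
  let ?one = "vec n (\<lambda>_. 1::real)"
  have L: "?L \<in> carrier_mat n n" by (rule lap_carrier)
  have A: "?A \<in> carrier_mat n n" using L by simp
  interpret K: kernel n n ?A by (unfold_locales, rule A)
  have Lone: "?L *\<^sub>v ?one = 0\<^sub>v n"
    using L lap_one[of _ n E] by (intro eq_vecI, auto)
  have one_ker: "?one \<in> mat_kernel ?A"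
  proof (rule mat_kernelI[OF A])
    have "?A *\<^sub>v ?one = ?L *\<^sub>v (?L *\<^sub>v ?one)" using L by (intro assoc_mult_mat_vec, auto)
    also have "\<dots> = 0\<^sub>v n" unfolding Lone using L by (intro eq_vecI, auto)
    finally show "?A *\<^sub>v ?one = 0\<^sub>v n" .
  qed auto
  have sub: "{?one} \<subseteq> mat_kernel ?A" using one_ker by auto
  have spaneq: "K.span {?one} = mat_kernel ?A"
  proof
    show "K.span {?one} \<subseteq> mat_kernel ?A"
      using K.Ker.span_is_submodule[OF sub] by (simp add: submodule_def)
  next
    show "mat_kernel ?A \<subseteq> K.span {?one}"
    proof
      fix v assume v: "v \<in> mat_kernel ?A"
      from mat_kernelD[OF A v] have vc: "v \<in> carrier_vec n" and Av: "?A *\<^sub>v v = 0\<^sub>v n" by auto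
      have "?L *\<^sub>v (?L *\<^sub>v v) = 0\<^sub>v n" using Av L vc by simp
      from lap_sq_kernel[OF sg vc this] have Lv: "?L *\<^sub>v v = 0\<^sub>v n" .
      have z: "(\<Sum>i<n. v $ i * (?L *\<^sub>v v) $ i) = 0" using Lv by simp
      have "v = (v $ 0) \<cdot>\<^sub>v ?one"
      proof (rule eq_vecI)
        fix i assume "i < dim_vec ((v $ 0) \<cdot>\<^sub>v ?one)"
        hence i: "i < n" by simp
        show "v $ i = ((v $ 0) \<cdot>\<^sub>v ?one) $ i" using lap_kernel_const[OF sg conn vc z i] i by simp
      qed (use vc in simp)
      moreover have "?one \<in> K.span {?one}" using K.Ker.in_own_span[OF sub] by auto
      moreover have "(v $ 0) \<cdot>\<^sub>v ?one \<in> K.span {?one}"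
        using submodule.smult_closed[OF K.Ker.span_is_submodule[OF sub], of "v $ 0" ?one] \<open>?one \<in> K.span {?one}\<close>
        by simp
      ultimately show "v \<in> K.span {?one}" by simp
    qed
  qed
  from K.Ker.gen_ge_dim[of "{?one}"] spaneq sub show ?thesis by simp
qed

lemma lap_order0: assumes sg: "simple_graph n E" and conn: "connected_graph n E"
  and n0: "0 < n"
  shows "Polynomial.order 0 (char_poly (laplacian n E)) \<le> 1"
proof -
  let ?L = "laplacian n E"
  have L: "?L \<in> carrier_mat n n" by (rule lap_carrier)
  from lap_split[OF sg] obtain es where cp: "char_poly ?L = (\<Prod>e\<leftarrow>es. [:- e, 1:])" by auto
  from jordan_nf_exists[OF L cp] obtain n_as where jnf: "jordan_nf ?L n_as" by auto
  have ord: "Polynomial.order 0 (char_poly ?L) = sum_list (map fst [(k, e)\<leftarrow>n_as . e = 0])"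
    unfolding jordan_nf_char_poly[OF jnf] by (rule order_jordan_prod)
  have "dim_gen_eigenspace ?L 0 2 = (\<Sum>k\<leftarrow>map fst [(k, e)\<leftarrow>n_as . e = 0]. min 2 k)"
    by (rule dim_gen_eigenspace[OF jnf])
  moreover have "dim_gen_eigenspace ?L 0 2 = kernel.dim n (?L * ?L)"
  proof -
    have "char_matrix ?L 0 = ?L" unfolding char_matrix_def using L by (intro eq_matI, auto)
    moreover have "?L ^\<^sub>m 2 = ?L * ?L" using L by (simp add: numeral_2_eq_2)
    ultimately show ?thesis unfolding dim_gen_eigenspace_def kernel_dim_def using L by simp
  qed
  ultimately have "(\<Sum>k\<leftarrow>map fst [(k, e)\<leftarrow>n_as . e = 0]. min 2 k) \<le> 1"
    using lap_sq_kernel_dim[OF sg conn n0] by simp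
  with min2_sum_list[of "map fst [(k, e)\<leftarrow>n_as . e = 0]"] ord show ?thesis
    by (simp add: comp_def)
qed



lemma proots_linprod: "proots (\<Prod>e\<leftarrow>es. [:- e, 1:]) = mset (es :: 'a :: idom list)"
proof (induct es)
  case Nil then show ?case by simp
next
  case (Cons e es)
  have nz: "(\<Prod>e\<leftarrow>es. [:- e, 1:]) \<noteq> (0 :: 'a poly)" by (auto simp: prod_list_zero_iff)
  have nz2: "[:- e, 1:] \<noteq> (0 :: 'a poly)" by simp
  show ?case using Cons proots_mult[OF nz2 nz] proots_linear_factor[of "- e"] by simp
qed

lemma lap_eigs: assumes sg: "simple_graph n E" and conn: "connected_graph n E" and n2: "n \<ge> 2"
  shows "alg_conn n E > 0 \<and> poly (char_poly (laplacian n E)) (alg_conn n E) = 0"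
proof -
  let ?L = "laplacian n E"
  have L: "?L \<in> carrier_mat n n" by (rule lap_carrier)
  from lap_split[OF sg] obtain es where cp: "char_poly ?L = (\<Prod>e\<leftarrow>es. [:- e, 1:])"
    and len: "length es = n" by auto
  have cpnz: "char_poly ?L \<noteq> 0" unfolding cp by (auto simp: prod_list_zero_iff)
  have pr: "proots (char_poly ?L) = mset es" unfolding cp by (rule proots_linprod)
  define s where "s = sort es"
  have ev: "lap_eigenvalues n E = s" unfolding lap_eigenvalues_def pr s_def
    by (simp add: sorted_list_of_multiset_mset)
  have ls: "length s = n" unfolding s_def using len by simp
  have sorted: "sorted s" unfolding s_def by simp
  have ms: "mset s = mset es" unfolding s_def by simp
  have root: "\<And>e. e \<in> set s \<Longrightarrow> poly (char_poly ?L) e = 0"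
  proof -
    fix e assume "e \<in> set s"
    hence "e \<in># proots (char_poly ?L)" unfolding pr using ms by (metis set_mset_mset)
    then show "poly (char_poly ?L) e = 0" using cpnz by simp
  qed
  have nonneg: "\<And>e. e \<in> set s \<Longrightarrow> e \<ge> 0"
  proof -
    fix e assume "e \<in> set s"
    hence "eigenvalue ?L e" using root eigenvalue_root_char_poly[OF L] by simp
    then obtain v where "eigenvector ?L v e" unfolding eigenvalue_def by auto
    then show "e \<ge> 0" by (rule lap_ev_nonneg[OF sg])
  qed
  have cnt: "count (mset s) 0 \<le> 1"
    using lap_order0[OF sg conn] n2 cpnz pr ms by (metis count_proots less_le_trans pos2)
  from ls n2 obtain a b rest where sab: "s = a # b # rest"
    by (cases s; cases "tl s", auto)
  have ab: "a \<le> b" using sorted unfolding sab by simp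
  have b0: "b > 0"
  proof (rule ccontr)
    assume "\<not> b > 0"
    moreover have "a \<ge> 0" "b \<ge> 0" using nonneg unfolding sab by auto
    ultimately have "a = 0" "b = 0" using ab by auto
    then have "count (mset s) 0 \<ge> 2" unfolding sab by simp
    with cnt show False by simp
  qed
  have ac: "alg_conn n E = b" unfolding alg_conn_def ev sab by simp
  show ?thesis unfolding ac using b0 root[of b] unfolding sab by simp
qed



lemma main_ineq: assumes sg: "simple_graph n E"
  and ev: "eigenvector (laplacian n E) x lam" and lam0: "lam \<noteq> 0"
  and a: "a < n" and b: "b < n"
  and amax: "\<forall>i<n. x $ i \<le> x $ a" and bmin: "\<forall>i<n. x $ b \<le> x $ i"
  and d: "dist_le E a b 2"
  shows "lam \<ge> 1"
proof -
  let ?L = "laplacian n E"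
  have dr: "dim_row ?L = n" using lap_carrier[of n E] by simp
  from ev[unfolded eigenvector_def dr] have x: "x \<in> carrier_vec n" and x0: "x \<noteq> 0\<^sub>v n"
    and Lx: "?L *\<^sub>v x = lam \<cdot>\<^sub>v x" by auto
  define M where "M = x $ a"
  define m where "m = x $ b"
  have Lxi: "\<And>i. i < n \<Longrightarrow> lam * x $ i = (\<Sum>k\<in>{k. k < n \<and> E i k}. x $ i - x $ k)"
    using lap_mult[OF x, of _ E] Lx x by (metis index_smult_vec(1) carrier_vecD)
  have Mm: "M > m"
  proof (rule ccontr)
    assume "\<not> M > m"
    hence eq: "\<And>i. i < n \<Longrightarrow> x $ i = M" using amax bmin unfolding M_def m_def
      by (meson antisym dual_order.trans not_less)
    have "\<And>i. i < n \<Longrightarrow> lam * x $ i = 0"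
    proof -
      fix i assume i: "i < n"
      have "(\<Sum>k\<in>{k. k < n \<and> E i k}. x $ i - x $ k) = 0"
        by (rule sum.neutral, insert eq i, auto)
      with Lxi[OF i] show "lam * x $ i = 0" by simp
    qed
    moreover from x0 x obtain i where "i < n" "x $ i \<noteq> 0" by (auto simp: vec_eq_iff)
    ultimately show False using lam0 by auto
  qed
  let ?Sa = "{k. k < n \<and> E a k}"
  let ?Sb = "{k. k < n \<and> E b k}"
  have la: "lam * M = (\<Sum>k\<in>?Sa. M - x $ k)" unfolding M_def by (rule Lxi[OF a])
  have lb: "- (lam * m) = (\<Sum>k\<in>?Sb. x $ k - m)" unfolding m_def
    using Lxi[OF b] by (simp add: sum_negf[symmetric])
  have ta: "\<And>c. c \<in> ?Sa \<Longrightarrow> M - x $ c \<le> (\<Sum>k\<in>?Sa. M - x $ k)"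
    by (rule member_le_sum, insert amax, auto simp: M_def)
  have tb: "\<And>c. c \<in> ?Sb \<Longrightarrow> x $ c - m \<le> (\<Sum>k\<in>?Sb. x $ k - m)"
    by (rule member_le_sum, insert bmin, auto simp: m_def)
  have sa0: "0 \<le> (\<Sum>k\<in>?Sa. M - x $ k)" by (rule sum_nonneg, insert amax, auto simp: M_def)
  have sb0: "0 \<le> (\<Sum>k\<in>?Sb. x $ k - m)" by (rule sum_nonneg, insert bmin, auto simp: m_def)
  have split: "lam * (M - m) = (\<Sum>k\<in>?Sa. M - x $ k) + (\<Sum>k\<in>?Sb. x $ k - m)"
    using la lb by (simp add: algebra_simps)
  have key: "lam * (M - m) \<ge> M - m"
  proof -
    from d obtain dd where dd: "dd \<le> 2" and p: "(E ^^ dd) a b" unfolding dist_le_def by auto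
    have "dd = 0 \<or> dd = 1 \<or> dd = 2" using dd by auto
    then show ?thesis
    proof (elim disjE)
      assume "dd = 0" then have "a = b" using p by simp
      then show ?thesis using Mm unfolding M_def m_def by simp
    next
      assume "dd = 1" then have e: "E a b" using p by auto
      have "M - x $ b \<le> (\<Sum>k\<in>?Sa. M - x $ k)" using ta e b by auto
      then show ?thesis using split sb0 unfolding m_def by simp
    next
      assume "dd = 2" then obtain c where e1: "E a c" and e2: "E c b" using p
        by (auto simp: numeral_2_eq_2)
      have c: "c < n" and e3: "E b c" using sg e1 e2 unfolding simple_graph_def by auto
      have "M - x $ c \<le> (\<Sum>k\<in>?Sa. M - x $ k)" using ta e1 c by auto
      moreover have "x $ c - m \<le> (\<Sum>k\<in>?Sb. x $ k - m)" using tb e3 c by auto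
      ultimately show ?thesis using split by simp
    qed
  qed
  from key Mm show ?thesis by simp
qed

theorem lemma4:
  shows "(\<forall>(n::nat) E (x::real vec).
            n \<ge> 2 \<longrightarrow> simple_graph n E \<longrightarrow> connected_graph n E \<longrightarrow>
            eigenvector (laplacian n E) x (alg_conn n E) \<longrightarrow>
            (\<forall>i<n. x $ i \<le> x $ 0) \<longrightarrow> (\<forall>i<n. x $ 1 \<le> x $ i) \<longrightarrow>
            dist_le E 0 1 2 \<longrightarrow> alg_conn n E \<ge> 1)
       \<and> (\<forall>(n::nat) E.
            n \<ge> 2 \<longrightarrow> simple_graph n E \<longrightarrow> connected_graph n E \<longrightarrow>
            diameter_lt3 n E \<longrightarrow> alg_conn n E \<ge> 1)"
proof (intro conjI allI impI)
  fix n E and x :: "real vec"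
  assume n2: "n \<ge> 2" and sg: "simple_graph n E" and conn: "connected_graph n E"
    and ev: "eigenvector (laplacian n E) x (alg_conn n E)"
    and amax: "\<forall>i<n. x $ i \<le> x $ 0" and bmin: "\<forall>i<n. x $ 1 \<le> x $ i"
    and d: "dist_le E 0 1 2"
  have "alg_conn n E \<noteq> 0" using lap_eigs[OF sg conn n2] by simp
  from main_ineq[OF sg ev this _ _ amax bmin d] n2 show "alg_conn n E \<ge> 1" by simp
next
  fix n E
  assume n2: "n \<ge> 2" and sg: "simple_graph n E" and conn: "connected_graph n E"
    and diam: "diameter_lt3 n E"
  let ?L = "laplacian n E"
  have L: "?L \<in> carrier_mat n n" by (rule lap_carrier)
  from lap_eigs[OF sg conn n2] have pos: "alg_conn n E > 0"
    and rt: "poly (char_poly ?L) (alg_conn n E) = 0" by auto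
  have "eigenvalue ?L (alg_conn n E)" using rt eigenvalue_root_char_poly[OF L] by simp
  then obtain x where ev: "eigenvector ?L x (alg_conn n E)" unfolding eigenvalue_def by auto
  have ne: "(\<lambda>i. x $ i) ` {..<n} \<noteq> {}" using n2 by (auto simp: lessThan_empty_iff)
  have fin: "finite ((\<lambda>i. x $ i) ` {..<n})" by simp
  obtain a where a: "a < n" and aM: "x $ a = Max ((\<lambda>i. x $ i) ` {..<n})"
    using Max_in[OF fin ne] by auto
  obtain b where b: "b < n" and bM: "x $ b = Min ((\<lambda>i. x $ i) ` {..<n})"
    using Min_in[OF fin ne] by auto
  have amax: "\<forall>i<n. x $ i \<le> x $ a" unfolding aM using fin by auto
  have bmin: "\<forall>i<n. x $ b \<le> x $ i" unfolding bM using fin by auto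
  have d: "dist_le E a b 2" using diam a b unfolding diameter_lt3_def by auto
  from main_ineq[OF sg ev _ a b amax bmin d] pos show "alg_conn n E \<ge> 1" by simp
qed


end
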